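(* Every commutative monoid $S$ that is artinian (i.e. $S_S$ satisfies the descending chain condition on congruences) satisfies condition $A$.
   Context: A monoid $S$ satisfies condition $A$ if every right $S$-act satisfies the ascending chain condition on cyclic subacts. A congruence on $S_S$ is an equivalence relation $\rho$ on $S$ with $a\,\rho\,b\Rightarrow as\,\rho\,bs$ for all $s\in S$. *)

theory Defs
  imports Main
begin

definition right_act :: "'x set \<Rightarrow> ('x \<Rightarrow> 's::monoid_mult \<Rightarrow> 'x) \<Rightarrow> bool" where
  "right_act X act \<longleftrightarrow>
     (\<forall>x\<in>X. \<forall>s. act x s \<in> X) \<and>
     (\<forall>x\<in>X. act x 1 = x) \<and>
     (\<forall>x\<in>X. \<forall>s t. act (act x s) t = act x (s * t))"

definition cyclic_subact :: "('x \<Rightarrow> 's::monoid_mult \<Rightarrow> 'x) \<Rightarrow> 'x \<Rightarrow> 'x set" where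
  "cyclic_subact act x = range (act x)"

definition acc_cyclic_subacts :: "'x set \<Rightarrow> ('x \<Rightarrow> 's::monoid_mult \<Rightarrow> 'x) \<Rightarrow> bool" where
  "acc_cyclic_subacts X act \<longleftrightarrow>
     (\<forall>f :: nat \<Rightarrow> 'x. (\<forall>n. f n \<in> X) \<and>
        (\<forall>n. cyclic_subact act (f n) \<subseteq> cyclic_subact act (f (Suc n))) \<longrightarrow>
        (\<exists>N. \<forall>n\<ge>N. cyclic_subact act (f n) = cyclic_subact act (f N)))"

definition right_congruence :: "('s::monoid_mult \<times> 's) set \<Rightarrow> bool" where
  "right_congruence \<rho> \<longleftrightarrow> equiv UNIV \<rho> \<and> (\<forall>a b s. (a, b) \<in> \<rho> \<longrightarrow> (a * s, b * s) \<in> \<rho>)"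

definition artinian :: "'s::monoid_mult itself \<Rightarrow> bool" where
  "artinian _ \<longleftrightarrow>
     (\<forall>r :: nat \<Rightarrow> ('s \<times> 's) set. (\<forall>n. right_congruence (r n)) \<and> (\<forall>n. r (Suc n) \<subseteq> r n) \<longrightarrow>
        (\<exists>N. \<forall>n\<ge>N. r n = r N))"

end

theory Submission
  imports Defs
begin

lemma key:
  fixes act :: "'x \<Rightarrow> 's::comm_monoid_mult \<Rightarrow> 'x"
  assumes art: "artinian TYPE('s)" and ra: "right_act X act" and y: "y \<in> X"
    and ker: "\<forall>a b. act y a = act y b \<longleftrightarrow> act (act y t) a = act (act y t) b"
  shows "y \<in> range (act (act y t))"
proof -
  have act: "act (act y a) b = act y (a*b)" for a b using ra y unfolding right_act_def by blast
  have inj: "act y (t^k * a) = act y (t^k * b) \<Longrightarrow> act y a = act y b" for k a b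
  proof (induction k arbitrary: a b)
    case 0 then show ?case by simp
  next
    case (Suc k)
    have "act y (t^k * (t*a)) = act y (t^k * (t*b))" using Suc.prems by (simp add: ac_simps)
    then have "act y (t*a) = act y (t*b)" using Suc.IH by blast
    then show ?case using ker act by metis
  qed
  define I where "I k = {act y (t^k * u) | u. True}" for k
  define R where "R k = {(a,b). act y a = act y b \<or> (act y a \<in> I k \<and> act y b \<in> I k)}" for k
  have cong: "right_congruence (R k)" for k
    unfolding right_congruence_def
  proof
    show "equiv UNIV (R k)"
      unfolding equiv_def refl_on_def sym_def trans_def R_def by auto
    show "\<forall>a b s. (a, b) \<in> R k \<longrightarrow> (a * s, b * s) \<in> R k"
    proof (intro allI impI)
      fix a b s assume ab: "(a, b) \<in> R k"
      have cl: "act y (a*s) \<in> I k" if "act y a \<in> I k" for a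
      proof -
        from that obtain u where "act y a = act y (t^k * u)" unfolding I_def by blast
        then have "act y (a*s) = act y (t^k * (u*s))" using act by (metis mult.assoc)
        then show ?thesis unfolding I_def by blast
      qed
      have "act y a = act y b \<Longrightarrow> act y (a*s) = act y (b*s)" using act by metis
      then show "(a * s, b * s) \<in> R k" using ab cl unfolding R_def by auto
    qed
  qed
  have IS: "I (Suc k) \<subseteq> I k" for k
  proof
    fix x assume "x \<in> I (Suc k)"
    then obtain u where "x = act y (t^Suc k * u)" unfolding I_def by blast
    then have "x = act y (t^k * (t*u))" by (simp add: ac_simps)
    then show "x \<in> I k" unfolding I_def by blast
  qed
  have desc: "R (Suc k) \<subseteq> R k" for k using IS[of k] unfolding R_def by auto
  obtain K where K: "\<forall>n\<ge>K. R n = R K"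
    using art cong desc unfolding artinian_def by blast
  have "act y (t^K) \<in> I K" unfolding I_def by (metis (mono_tags, lifting) mem_Collect_eq mult_1_right)
  moreover have "act y (t^Suc K) \<in> I K" unfolding I_def by (metis (mono_tags, lifting) mem_Collect_eq power_Suc2)
  ultimately have "(t^K, t^Suc K) \<in> R K" unfolding R_def by auto
  then have "(t^K, t^Suc K) \<in> R (Suc K)" using K by (metis le_SucI order_refl)
  then obtain u where u: "act y (t^K) = act y (t^Suc K * u)"
    unfolding R_def I_def by (auto, metis mult_1_right)
  then have "act y (t^K * 1) = act y (t^K * (t*u))" by (simp add: ac_simps)
  then have "act y 1 = act y (t*u)" using inj by blast
  then have "y = act (act y t) u" using act ra y unfolding right_act_def by metis
  then show ?thesis by blast
qed

theorem mainTheorem17: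
  fixes X :: "'x set" and act :: "'x \<Rightarrow> 's::comm_monoid_mult \<Rightarrow> 'x"
  assumes "artinian TYPE('s)"
    and "right_act X act"
  shows "acc_cyclic_subacts X act"
  unfolding acc_cyclic_subacts_def
proof (intro allI impI)
  fix f :: "nat \<Rightarrow> 'x"
  assume "(\<forall>n. f n \<in> X) \<and> (\<forall>n. cyclic_subact act (f n) \<subseteq> cyclic_subact act (f (Suc n)))"
  then have fX: "\<And>n. f n \<in> X" and ch: "\<And>n. range (act (f n)) \<subseteq> range (act (f (Suc n)))"
    unfolding cyclic_subact_def by auto
  have act: "act (act x a) b = act x (a*b)" if "x \<in> X" for x a b
    using assms(2) that unfolding right_act_def by blast
  have one: "act x 1 = x" if "x \<in> X" for x using assms(2) that unfolding right_act_def by blast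
  have mono: "range (act (f m)) \<subseteq> range (act (f n))" if "m \<le> n" for m n
    using lift_Suc_mono_le[of "\<lambda>n. range (act (f n))", OF ch that] .
  have mem: "f m \<in> range (act (f n))" if "m \<le> n" for m n
    using mono[OF that] one[OF fX[of m]] by (metis rangeI subsetD)
  define r where "r n = {(a,b). act (f n) a = act (f n) b}" for n
  have cong: "right_congruence (r n)" for n
    unfolding right_congruence_def r_def equiv_def refl_on_def sym_def trans_def
    using act[OF fX[of n]] by (auto, metis)
  have desc: "r (Suc n) \<subseteq> r n" for n
  proof
    fix p assume p: "p \<in> r (Suc n)"
    obtain a b where pab: "p = (a,b)" by fastforce
    obtain s where s: "f n = act (f (Suc n)) s" using mem[of n "Suc n"] by auto
    have "act (f n) a = act (f (Suc n)) (a*s)" using s act[OF fX[of "Suc n"]] by (simp add: mult.commute)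
    also have "\<dots> = act (act (f (Suc n)) a) s" using act[OF fX[of "Suc n"]] by simp
    also have "\<dots> = act (act (f (Suc n)) b) s" using p pab unfolding r_def by simp
    also have "\<dots> = act (f (Suc n)) (b*s)" using act[OF fX[of "Suc n"]] by simp
    also have "\<dots> = act (f n) b" using s act[OF fX[of "Suc n"]] by (simp add: mult.commute)
    finally show "p \<in> r n" using pab unfolding r_def by simp
  qed
  obtain N where N: "\<forall>n\<ge>N. r n = r N"
    using assms(1) cong desc unfolding artinian_def by blast
  show "\<exists>N. \<forall>n\<ge>N. cyclic_subact act (f n) = cyclic_subact act (f N)"
  proof (intro exI allI impI)
    fix n assume nN: "N \<le> n"
    obtain t where t: "f N = act (f n) t" using mem[OF nN] by auto
    have "\<forall>a b. act (f n) a = act (f n) b \<longleftrightarrow> act (act (f n) t) a = act (act (f n) t) b"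
      using N nN unfolding r_def t[symmetric] by (metis (mono_tags, lifting) case_prod_conv mem_Collect_eq)
    from key[OF assms(1) assms(2) fX[of n] this] obtain u where u: "f n = act (f N) u"
      using t by auto
    have "range (act (f n)) \<subseteq> range (act (f N))"
      using u act[OF fX[of N]] by auto
    then show "cyclic_subact act (f n) = cyclic_subact act (f N)"
      using mono[OF nN] unfolding cyclic_subact_def by blast
  qed
qed

end
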